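(* For $k,d\in\mathbb{Z}_{\ge0}$ let $L^o_{k,d}$ (resp. $L^e_{k,d}$) be the set of pairs of tuples $(\mathbf{k},\mathbf{l})=((k_1,\dots,k_n),(l_1,\dots,l_n))$, $0\le n\le k$, with $k_u\ge1$, $l_u\ge0$, $k_u-1-l_u\ge0$, $k_1+\dots+k_n=k$, such that $s:=\sum_{u=1}^n(k_u-1-l_u)$ satisfies $s\le d$ and $s$ is odd (resp. even); the empty pair ($n=0$, $s=0$) counts as even. Then $|L^o_{0,d}|=|L^o_{1,d}|=0$, $|L^e_{0,d}|=|L^e_{1,d}|=1$; $|L^o_{2,0}|=0$, $|L^o_{2,d}|=1$ for $d\ge1$, $|L^e_{2,d}|=2$; $|L^o_{k,0}|=0$, $|L^e_{0,0}|=1$, $|L^e_{k,0}|=2^{k-1}$ for $k\ge1$; and for $k\ge3$, $d\ge1$, \[|L^o_{k,d}|=2|L^o_{k-1,d}|+|L^e_{k-1,d-1}|-|L^e_{k-2,d-1}|,\qquad |L^e_{k,d}|=2|L^e_{k-1,d}|+|L^o_{k-1,d-1}|-|L^o_{k-2,d-1}|.\] In particular $|L^o_{0,0}|=0$, $|L^e_{0,0}|=1$, and for $k\ge1$, $|L^o_{k,k}|=(F_{2k}-F_k)/2$ and $|L^e_{k,k}|=(F_{2k}+F_k)/2$.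
   Context: $F_j$ denotes the $j$-th Fibonacci number ($F_1=F_2=1$, $F_{j}=F_{j-1}+F_{j-2}$). In the paper each pair $(\mathbf{k},\mathbf{l})$ represents the iterated log-sine integral $\mathrm{Ls}_{\mathbf{k}}^{\mathbf{l}}(\sigma)=(-1)^n\int_0^{\sigma}\int_0^{\theta_n}\cdots\int_0^{\theta_2}\prod_{u}\theta_u^{l_u}(\log|2\sin(\theta_u/2)|)^{k_u-1-l_u}\,d\theta_1\cdots d\theta_n$ at a fixed real $\sigma$. *)

theory Defs
  imports Complex_Main "HOL-Number_Theory.Fib"
begin

definition admissible :: "nat \<Rightarrow> nat list \<Rightarrow> nat list \<Rightarrow> bool" where
  "admissible k ks ls \<longleftrightarrow> length ks = length ls \<and> length ks \<le> k \<and>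
     (\<forall>u < length ks. 1 \<le> ks ! u \<and> ls ! u + 1 \<le> ks ! u) \<and> sum_list ks = k"

text \<open>s = sum of (k_u - 1 - l_u) (all summands are nonnegative for admissible pairs).\<close>
definition sdeg :: "nat list \<Rightarrow> nat list \<Rightarrow> nat" where
  "sdeg ks ls = (\<Sum>u < length ks. ks ! u - 1 - ls ! u)"

definition Lodd :: "nat \<Rightarrow> nat \<Rightarrow> (nat list \<times> nat list) set" where
  "Lodd k d = {(ks, ls). admissible k ks ls \<and> sdeg ks ls \<le> d \<and> odd (sdeg ks ls)}"

definition Leven :: "nat \<Rightarrow> nat \<Rightarrow> (nat list \<times> nat list) set" where
  "Leven k d = {(ks, ls). admissible k ks ls \<and> sdeg ks ls \<le> d \<and> even (sdeg ks ls)}"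

end

theory Submission
  imports Defs
begin

lemma len_le_sum: "(\<forall>x\<in>set ks. 1 \<le> (x::nat)) \<Longrightarrow> length ks \<le> sum_list ks"
  by (induction ks) auto

lemma adm_alt: "admissible k ks ls \<longleftrightarrow> list_all2 (\<lambda>m l. 1 \<le> m \<and> l + 1 \<le> m) ks ls \<and> sum_list ks = k"
proof -
  have "list_all2 (\<lambda>m l. 1 \<le> m \<and> l + 1 \<le> m) ks ls \<Longrightarrow> length ks \<le> sum_list ks"
    by (rule len_le_sum) (auto simp: list_all2_conv_all_nth in_set_conv_nth)
  then show ?thesis unfolding admissible_def list_all2_conv_all_nth by auto
qed

lemma adm_Nil1[simp]: "admissible k [] ls \<longleftrightarrow> k = 0 \<and> ls = []"
  by (auto simp: adm_alt)
lemma adm_Nil2[simp]: "admissible k ks [] \<longleftrightarrow> k = 0 \<and> ks = []"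
  by (auto simp: adm_alt)
lemma adm_Cons[simp]: "admissible k (m#ks) (l#ls) \<longleftrightarrow> 1 \<le> m \<and> l + 1 \<le> m \<and> m \<le> k \<and> admissible (k - m) ks ls"
  by (auto simp: adm_alt)

lemma sdeg_Nil[simp]: "sdeg [] ls = 0" by (simp add: sdeg_def)
lemma sdeg_Cons[simp]: "sdeg (m#ks) (l#ls) = (m - 1 - l) + sdeg ks ls"
  unfolding sdeg_def by (simp only: length_Cons sum.lessThan_Suc_shift) simp

lemma sdeg_le: "admissible k ks ls \<Longrightarrow> sdeg ks ls \<le> k"
proof (induction ks arbitrary: ls k)
  case Nil then show ?case by simp
next
  case (Cons m ks)
  then obtain l ls' where "ls = l # ls'" by (cases ls) auto
  with Cons show ?case by fastforce
qed


definition LQ :: "(nat \<Rightarrow> bool) \<Rightarrow> nat \<Rightarrow> (nat list \<times> nat list) set" where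
  "LQ Q k = {(ks, ls). admissible k ks ls \<and> Q (sdeg ks ls)}"
definition ZQ :: "(nat \<Rightarrow> bool) \<Rightarrow> nat \<Rightarrow> (nat list \<times> nat list) set" where
  "ZQ Q k = {(ks, ls). (ks, ls) \<in> LQ Q k \<and> ks \<noteq> [] \<and> hd ls = 0}"
definition c10 :: "nat list \<times> nat list \<Rightarrow> nat list \<times> nat list" where
  "c10 x = (1 # fst x, 0 # snd x)"
definition inc0 :: "nat list \<times> nat list \<Rightarrow> nat list \<times> nat list" where
  "inc0 x = (Suc (hd (fst x)) # tl (fst x), Suc (hd (snd x)) # tl (snd x))"
definition incK :: "nat list \<times> nat list \<Rightarrow> nat list \<times> nat list" where
  "incK x = (Suc (hd (fst x)) # tl (fst x), snd x)"

lemma LQ_fin: "finite (LQ Q k)"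
proof -
  have "LQ Q k \<subseteq> {xs. set xs \<subseteq> {..k} \<and> length xs \<le> k} \<times> {xs. set xs \<subseteq> {..k} \<and> length xs \<le> k}"
  proof (clarsimp simp: LQ_def)
    fix ks ls assume a: "admissible k ks ls"
    then have l: "list_all2 (\<lambda>m l. 1 \<le> m \<and> l + 1 \<le> m) ks ls" "sum_list ks = k" by (auto simp: adm_alt)
    have "\<forall>x\<in>set ks. x \<le> k" using l(2) member_le_sum_list by blast
    moreover have "\<forall>x\<in>set ls. x \<le> k"
    proof
      fix x assume "x \<in> set ls"
      then obtain i where "i < length ls" "x = ls ! i" by (auto simp: in_set_conv_nth)
      moreover have "ks ! i \<le> k" using l \<open>i < length ls\<close> member_le_sum_list[of "ks!i" ks]
        by (auto simp: list_all2_conv_all_nth)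
      ultimately show "x \<le> k" using l(1) by (auto simp: list_all2_conv_all_nth)
    qed
    ultimately show "set ks \<subseteq> {..k} \<and> length ks \<le> k \<and> set ls \<subseteq> {..k} \<and> length ls \<le> k"
      using a by (auto simp: admissible_def)
  qed
  moreover have "finite ({xs. set xs \<subseteq> {..k} \<and> length xs \<le> k} \<times> {xs. set xs \<subseteq> {..k} \<and> length xs \<le> k})"
    by (intro finite_cartesian_product finite_lists_length_le) auto
  ultimately show ?thesis by (rule finite_subset)
qed

lemma LQ_0: "LQ Q 0 = (if Q 0 then {([],[])} else {})"
proof -
  have "admissible 0 ks ls \<longleftrightarrow> ks = [] \<and> ls = []" for ks ls
    by (cases ks; cases ls) auto
  then show ?thesis by (auto simp: LQ_def)
qed

lemma ZQ_0: "ZQ Q 0 = {}"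
  by (auto simp: ZQ_def LQ_0 split: if_splits)

lemma Nil_notin: "k \<ge> 1 \<Longrightarrow> ([],[]) \<notin> LQ Q k"
  by (auto simp: LQ_def)

lemma decomp:
  assumes "k \<ge> 1"
  shows "LQ Q k = c10 ` LQ Q (k-1) \<union> inc0 ` (LQ Q (k-1) - {([],[])}) \<union> incK ` ZQ (Q \<circ> Suc) (k-1)"
proof (intro equalityI subsetI)
  fix x assume "x \<in> LQ Q k"
  then obtain ks ls where x: "x = (ks, ls)" "admissible k ks ls" "Q (sdeg ks ls)" by (auto simp: LQ_def)
  then obtain m ks' l ls' where c: "ks = m # ks'" "ls = l # ls'" using assms
    by (cases ks; cases ls) auto
  show "x \<in> c10 ` LQ Q (k-1) \<union> inc0 ` (LQ Q (k-1) - {([],[])}) \<union> incK ` ZQ (Q \<circ> Suc) (k-1)"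
  proof (cases "m = 1")
    case True
    then have "x = c10 (ks', ls')" "(ks', ls') \<in> LQ Q (k-1)" using x c by (auto simp: c10_def LQ_def)
    then show ?thesis by blast
  next
    case False
    show ?thesis
    proof (cases "l = 0")
      case True
      have "m \<ge> 2" using False x c by auto
      then have "x = incK ((m - 1) # ks', 0 # ls')" "((m - 1) # ks', 0 # ls') \<in> ZQ (Q \<circ> Suc) (k-1)"
        using x c True by (auto simp: incK_def LQ_def ZQ_def Suc_diff_Suc)
      then show ?thesis by blast
    next
      case False
      then have "x = inc0 ((m - 1) # ks', (l - 1) # ls')" "((m - 1) # ks', (l - 1) # ls') \<in> LQ Q (k-1) - {([],[])}"
        using x c by (auto simp: inc0_def LQ_def)
      then show ?thesis by blast
    qed
  qed
next
  fix x assume "x \<in> c10 ` LQ Q (k-1) \<union> inc0 ` (LQ Q (k-1) - {([],[])}) \<union> incK ` ZQ (Q \<circ> Suc) (k-1)"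
  then consider y where "y \<in> LQ Q (k-1)" "x = c10 y"
    | y where "y \<in> LQ Q (k-1)" "y \<noteq> ([],[])" "x = inc0 y"
    | y where "y \<in> ZQ (Q \<circ> Suc) (k-1)" "x = incK y" by blast
  then show "x \<in> LQ Q k"
  proof cases
    case 1 then show ?thesis using assms by (auto simp: c10_def LQ_def)
  next
    case 2
    then obtain ks ls where y: "y = (ks, ls)" "admissible (k-1) ks ls" "Q (sdeg ks ls)" by (auto simp: LQ_def)
    then obtain m ks' l ls' where c: "ks = m # ks'" "ls = l # ls'" using 2
      by (cases ks; cases ls) auto
    show ?thesis using 2 y c assms by (auto simp: inc0_def LQ_def)
  next
    case 3
    then obtain ks ls where y: "y = (ks, ls)" "admissible (k-1) ks ls" "Q (Suc (sdeg ks ls))" "ks \<noteq> []" "hd ls = 0"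
      by (auto simp: LQ_def ZQ_def)
    then obtain m ks' ls' where c: "ks = m # ks'" "ls = 0 # ls'"
      by (cases ks; cases ls) auto
    show ?thesis using 3 y c assms by (auto simp: incK_def LQ_def)
  qed
qed




lemma LQ_ne: "(ks, ls) \<in> LQ Q k \<Longrightarrow> (ks, ls) \<noteq> ([],[]) \<Longrightarrow> ks \<noteq> [] \<and> ls \<noteq> []"
  by (auto simp: LQ_def admissible_def)

lemma inj_c10: "inj_on c10 A"
  by (auto simp: inj_on_def c10_def prod_eq_iff)

lemma inj_inc0: "inj_on inc0 (LQ Q n - {([],[])})"
proof (rule inj_onI)
  fix x y assume x: "x \<in> LQ Q n - {([],[])}" and y: "y \<in> LQ Q n - {([],[])}" and e: "inc0 x = inc0 y"
  obtain a b c d where xy: "x = (a,b)" "y = (c,d)" by (cases x; cases y)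
  have "a \<noteq> [] \<and> b \<noteq> [] \<and> c \<noteq> [] \<and> d \<noteq> []" using LQ_ne x y xy by blast
  then show "x = y" using e xy by (cases a; cases b; cases c; cases d) (auto simp: inc0_def)
qed

lemma inj_incK: "inj_on incK (ZQ Q n)"
proof (rule inj_onI)
  fix x y assume x: "x \<in> ZQ Q n" and y: "y \<in> ZQ Q n" and e: "incK x = incK y"
  obtain a b c d where xy: "x = (a,b)" "y = (c,d)" by (cases x; cases y)
  have "a \<noteq> []" "c \<noteq> []" using x y unfolding xy ZQ_def by simp_all
  then obtain m a' m' c' where "a = m # a'" "c = m' # c'" by (cases a; cases c) auto
  then show "x = y" using e unfolding xy incK_def by simp
qed



lemma ZQ_fin: "finite (ZQ Q n)"
  by (rule finite_subset[OF _ LQ_fin[of Q n]]) (auto simp: ZQ_def)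

lemma card_rec:
  assumes "k \<ge> 1"
  shows "card (LQ Q k) = card (LQ Q (k-1)) + card (LQ Q (k-1) - {([],[])}) + card (ZQ (Q \<circ> Suc) (k-1))"
proof -
  let ?A = "c10 ` LQ Q (k-1)" and ?B = "inc0 ` (LQ Q (k-1) - {([],[])})" and ?C = "incK ` ZQ (Q \<circ> Suc) (k-1)"
  have fA: "finite ?A" and fB: "finite ?B" and fC: "finite ?C" using LQ_fin ZQ_fin by auto
  have dAB: "?A \<inter> ?B = {}"
  proof -
    { fix y z assume yz: "y \<in> LQ Q (k-1)" "z \<in> LQ Q (k-1) - {([],[])}" "c10 y = inc0 z"
      obtain a b where z: "z = (a,b)" by (cases z)
      have "a \<noteq> [] \<and> b \<noteq> []" using LQ_ne[of a b Q "k-1"] z yz by simp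
      then have False using \<open>c10 y = inc0 z\<close> by (cases a; cases b) (auto simp: c10_def inc0_def) }
    then show ?thesis by blast
  qed
  have dAC: "?A \<inter> ?C = {}"
  proof -
    { fix y z assume "y \<in> LQ Q (k-1)" "z \<in> ZQ (Q \<circ> Suc) (k-1)" "c10 y = incK z"
      then obtain a b where z: "z = (a,b)" "admissible (k-1) a b" "a \<noteq> []" by (cases z) (auto simp: ZQ_def LQ_def)
      then obtain m a' l b' where "a = m # a'" "b = l # b'" by (cases a; cases b) auto
      then have False using \<open>c10 y = incK z\<close> z by (auto simp: c10_def incK_def) }
    then show ?thesis by blast
  qed
  have dBC: "?B \<inter> ?C = {}"
  proof -
    { fix y z assume "y \<in> LQ Q (k-1) - {([],[])}" "z \<in> ZQ (Q \<circ> Suc) (k-1)" "inc0 y = incK z"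
      then obtain a b where z: "z = (a,b)" "admissible (k-1) a b" "a \<noteq> []" "hd b = 0" by (cases z) (auto simp: ZQ_def LQ_def)
      then obtain m a' b' where "a = m # a'" "b = 0 # b'" by (cases a; cases b) auto
      then have False using \<open>inc0 y = incK z\<close> z by (auto simp: inc0_def incK_def) }
    then show ?thesis by blast
  qed
  have "card (LQ Q k) = card (?A \<union> ?B \<union> ?C)" using decomp[OF assms] by simp
  also have "\<dots> = card ?A + card ?B + card ?C"
    using fA fB fC dAB dAC dBC by (simp add: card_Un_disjoint Int_Un_distrib2)
  also have "\<dots> = card (LQ Q (k-1)) + card (LQ Q (k-1) - {([],[])}) + card (ZQ (Q \<circ> Suc) (k-1))"
    using inj_c10 inj_inc0 inj_incK by (simp add: card_image)
  finally show ?thesis .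
qed

lemma card_ZQ:
  assumes "n \<ge> 1"
  shows "card (ZQ Q n) + card (LQ Q (n-1) - {([],[])}) = card (LQ Q n)"
proof -
  let ?B = "inc0 ` (LQ Q (n-1) - {([],[])})"
  have "ZQ Q n \<inter> ?B = {}"
  proof -
    { fix y z assume "z \<in> LQ Q (n-1) - {([],[])}" "y = inc0 z" "y \<in> ZQ Q n"
      then have False by (auto simp: inc0_def ZQ_def) }
    then show ?thesis by blast
  qed
  moreover have "LQ Q n = ZQ Q n \<union> ?B"
  proof (intro equalityI subsetI)
    fix x assume x: "x \<in> LQ Q n"
    show "x \<in> ZQ Q n \<union> ?B"
    proof (cases "x \<in> ZQ Q n")
      case False
      from x obtain a b where ab: "x = (a,b)" "admissible n a b" by (auto simp: LQ_def)
      then obtain m a' l b' where c: "a = m # a'" "b = l # b'" using assms by (cases a; cases b) auto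
      then have "l \<noteq> 0" using False x ab by (auto simp: ZQ_def)
      then have "x \<notin> c10 ` LQ Q (n-1)"
        using ab c by (auto simp: c10_def)
      moreover have "x \<notin> incK ` ZQ (Q \<circ> Suc) (n-1)"
      proof
        assume "x \<in> incK ` ZQ (Q \<circ> Suc) (n-1)"
        then obtain y where "y \<in> ZQ (Q \<circ> Suc) (n-1)" "x = incK y" by blast
        then show False using \<open>l \<noteq> 0\<close> ab c unfolding ZQ_def incK_def by auto
      qed
      ultimately show ?thesis using x decomp[OF assms, of Q] by blast
    qed simp
  next
    fix x assume "x \<in> ZQ Q n \<union> ?B"
    then show "x \<in> LQ Q n" using decomp[OF assms, of Q] by (auto simp: ZQ_def)
  qed
  ultimately show ?thesis using ZQ_fin LQ_fin card_image[OF inj_inc0]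
    by (metis card_Un_disjoint finite_Diff finite_imageI)
qed




lemma LQ_minus: "k \<ge> 1 \<Longrightarrow> LQ Q k - {([],[])} = LQ Q k"
  using Nil_notin by blast

lemma LQ0_minus: "LQ Q 0 - {([],[])} = {}"
  by (simp add: LQ_0)

lemma c_rec3:
  assumes "k \<ge> 3"
  shows "int (card (LQ Q k)) = 2 * int (card (LQ Q (k-1))) + int (card (LQ (Q \<circ> Suc) (k-1))) - int (card (LQ (Q \<circ> Suc) (k-2)))"
proof -
  define n where "n = k - 3"
  have n: "k = Suc (Suc (Suc n))" using assms unfolding n_def by simp
  have a: "card (LQ Q k) = card (LQ Q (k-1)) + card (LQ Q (k-1)) + card (ZQ (Q \<circ> Suc) (k-1))"
    using card_rec[of k Q] LQ_minus[of "k-1" Q] n by simp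
  have b0: "card (ZQ (Q \<circ> Suc) (Suc (Suc n))) + card (LQ (Q \<circ> Suc) (Suc n) - {([],[])}) = card (LQ (Q \<circ> Suc) (Suc (Suc n)))"
    using card_ZQ[of "Suc (Suc n)" "Q \<circ> Suc"] by simp
  have b: "card (ZQ (Q \<circ> Suc) (k-1)) + card (LQ (Q \<circ> Suc) (k-2)) = card (LQ (Q \<circ> Suc) (k-1))"
    using b0 LQ_minus[of "Suc n" "Q \<circ> Suc"] n by simp
  show ?thesis using a b by linarith
qed

lemma c0: "card (LQ Q 0) = (if Q 0 then 1 else 0)"
  by (simp add: LQ_0)

lemma c1: "card (LQ Q 1) = (if Q 0 then 1 else 0)"
  using card_rec[of 1 Q] by (simp add: LQ0_minus ZQ_0 LQ_0)

lemma c1': "card (LQ Q (Suc 0)) = (if Q 0 then 1 else 0)"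
  using c1 by simp

lemma c2: "card (LQ Q 2) = (if Q 0 then 2 else 0) + (if Q 1 then 1 else 0)"
proof -
  have "card (LQ Q 2) = card (LQ Q 1) + card (LQ Q 1) + card (ZQ (Q \<circ> Suc) 1)"
    using card_rec[of 2 Q] LQ_minus[of 1 Q] by simp
  moreover have "card (ZQ (Q \<circ> Suc) 1) = card (LQ (Q \<circ> Suc) 1)"
    using card_ZQ[of 1 "Q \<circ> Suc"] by (simp add: LQ0_minus)
  ultimately show ?thesis by (simp add: c1')
qed

lemma LQ_False: "LQ (\<lambda>_. False) k = {}"
  by (simp add: LQ_def)

lemma c_d0: "k \<ge> 1 \<Longrightarrow> card (LQ (\<lambda>s. s \<le> 0 \<and> even s) k) = 2 ^ (k - 1)"
proof (induction k rule: nat_induct_at_least)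
  case base then show ?case by (simp only: c1) simp
next
  case (Suc n)
  have "(\<lambda>s. s \<le> 0 \<and> even s) \<circ> Suc = (\<lambda>_. False)" by auto
  then have "card (LQ (\<lambda>s. s \<le> (0::nat) \<and> even s) (Suc n)) = 2 * card (LQ (\<lambda>s. s \<le> 0 \<and> even s) n)"
    using card_rec[of "Suc n" "\<lambda>s. s \<le> 0 \<and> even s"] LQ_minus[of n] Suc.hyps
    by (simp add: ZQ_def LQ_False)
  then show ?case using Suc.IH Suc.hyps by (simp add: power_Suc[symmetric] del: power_Suc)
qed

lemma Lodd_LQ: "Lodd k d = LQ (\<lambda>s. s \<le> d \<and> odd s) k"
  by (simp add: Lodd_def LQ_def)
lemma Leven_LQ: "Leven k d = LQ (\<lambda>s. s \<le> d \<and> even s) k"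
  by (simp add: Leven_def LQ_def)

lemma Lodd_kk: "Lodd k k = LQ odd k"
  using sdeg_le by (auto simp: Lodd_def LQ_def)
lemma Leven_kk: "Leven k k = LQ even k"
  using sdeg_le by (auto simp: Leven_def LQ_def)

lemma fib4: "int (fib (n + 4)) = 3 * int (fib (n + 2)) - int (fib n)"
proof -
  have c: "int (fib (Suc (Suc (Suc (Suc n))))) = 3 * int (fib (Suc (Suc n))) - int (fib n)" by simp
  have e: "n + 4 = Suc (Suc (Suc (Suc n)))" "n + 2 = Suc (Suc n)" by simp_all
  show ?thesis unfolding e by (rule c)
qed

lemma fib_main:
  "k \<ge> 1 \<Longrightarrow> int (card (LQ odd k)) + int (card (LQ even k)) = int (fib (2 * k))
     \<and> int (card (LQ even k)) - int (card (LQ odd k)) = int (fib k)"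
proof (induction k rule: less_induct)
  case (less k)
  show ?case
  proof (cases "k \<le> 2")
    case True
    then have "k = 1 \<or> k = 2" using less.prems by auto
    then show ?thesis
    proof
      assume "k = 1" then show ?thesis by (simp add: c1')
    next
      assume k: "k = 2"
      have "fib 4 = 3" by (simp add: numeral_eq_Suc)
      then show ?thesis using k by (simp add: c2)
    qed
  next
    case False
    have oe: "odd \<circ> Suc = even" "even \<circ> Suc = odd" by auto
    have r1: "int (card (LQ odd k)) = 2 * int (card (LQ odd (k-1))) + int (card (LQ even (k-1))) - int (card (LQ even (k-2)))"
      using c_rec3[of k odd] False oe by simp
    have r2: "int (card (LQ even k)) = 2 * int (card (LQ even (k-1))) + int (card (LQ odd (k-1))) - int (card (LQ odd (k-2)))"
      using c_rec3[of k even] False oe by simp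
    have i1: "int (card (LQ odd (k-1))) + int (card (LQ even (k-1))) = int (fib (2 * (k-1)))
     \<and> int (card (LQ even (k-1))) - int (card (LQ odd (k-1))) = int (fib (k-1))"
      using less.IH[of "k-1"] False by simp
    have i2: "int (card (LQ odd (k-2))) + int (card (LQ even (k-2))) = int (fib (2 * (k-2)))
     \<and> int (card (LQ even (k-2))) - int (card (LQ odd (k-2))) = int (fib (k-2))"
      using less.IH[of "k-2"] False by simp
    define n where "n = k - 3"
    have n: "k = n + 3" using False unfolding n_def by simp
    have f1: "int (fib (2 * k)) = 3 * int (fib (2 * (k-1))) - int (fib (2 * (k-2)))"
      using fib4[of "2 * n + 2"] n by (simp add: algebra_simps)
    have e3: "k = Suc (Suc (Suc n))" "k-1 = Suc (Suc n)" "k-2 = Suc n" using n by simp_all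
    have f2: "fib k = fib (k-1) + fib (k-2)"
      by (subst e3(2), subst e3(3), subst e3(1), rule fib.simps(3))
    show ?thesis using r1 r2 i1 i2 f1 f2 by simp
  qed
qed




lemma half_real: "2 * (a::real) = x \<Longrightarrow> a = x / 2" by simp

lemma Qo_Suc: "d \<ge> 1 \<Longrightarrow> (\<lambda>s. s \<le> d \<and> odd s) \<circ> Suc = (\<lambda>s. s \<le> d - 1 \<and> even s)"
  by (auto simp: fun_eq_iff)
lemma Qe_Suc: "d \<ge> 1 \<Longrightarrow> (\<lambda>s. s \<le> d \<and> even s) \<circ> Suc = (\<lambda>s. s \<le> d - 1 \<and> odd s)"
  by (auto simp: fun_eq_iff)

theorem theorem7:
  shows "(\<forall>d. card (Lodd 0 d) = 0 \<and> card (Lodd 1 d) = 0 \<and>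
              card (Leven 0 d) = 1 \<and> card (Leven 1 d) = 1)
    \<and> card (Lodd 2 0) = 0
    \<and> (\<forall>d\<ge>1. card (Lodd 2 d) = 1)
    \<and> (\<forall>d. card (Leven 2 d) = 2)
    \<and> (\<forall>k. card (Lodd k 0) = 0)
    \<and> card (Leven 0 0) = 1
    \<and> (\<forall>k\<ge>1. card (Leven k 0) = 2 ^ (k - 1))
    \<and> (\<forall>k\<ge>3. \<forall>d\<ge>1.
          int (card (Lodd k d)) = 2 * int (card (Lodd (k - 1) d))
             + int (card (Leven (k - 1) (d - 1))) - int (card (Leven (k - 2) (d - 1)))
        \<and> int (card (Leven k d)) = 2 * int (card (Leven (k - 1) d))
             + int (card (Lodd (k - 1) (d - 1))) - int (card (Lodd (k - 2) (d - 1))))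
    \<and> card (Lodd 0 0) = 0 \<and> card (Leven 0 0) = 1
    \<and> (\<forall>k\<ge>1. real (card (Lodd k k)) = (real (fib (2 * k)) - real (fib k)) / 2
             \<and> real (card (Leven k k)) = (real (fib (2 * k)) + real (fib k)) / 2)"
proof -
  have A: "\<forall>d. card (Lodd 0 d) = 0 \<and> card (Lodd 1 d) = 0 \<and> card (Leven 0 d) = 1 \<and> card (Leven 1 d) = 1"
    by (simp add: Lodd_LQ Leven_LQ c0 c1')
  have B: "card (Lodd 2 0) = 0" "\<forall>d\<ge>1. card (Lodd 2 d) = 1" "\<forall>d. card (Leven 2 d) = 2"
    by (auto simp: Lodd_LQ Leven_LQ c2)
  have C: "\<forall>k. card (Lodd k 0) = 0"
  proof
    fix k
    have "LQ (\<lambda>s. s \<le> 0 \<and> odd s) k = {}" by (auto simp: LQ_def elim: oddE)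
    then show "card (Lodd k 0) = 0" by (simp add: Lodd_LQ)
  qed
  have D: "card (Leven 0 0) = 1" by (simp add: Leven_LQ c0)
  have E: "\<forall>k\<ge>1. card (Leven k 0) = 2 ^ (k - 1)"
    using c_d0 by (simp add: Leven_LQ)
  have F: "\<forall>k\<ge>3. \<forall>d\<ge>1.
          int (card (Lodd k d)) = 2 * int (card (Lodd (k - 1) d))
             + int (card (Leven (k - 1) (d - 1))) - int (card (Leven (k - 2) (d - 1)))
        \<and> int (card (Leven k d)) = 2 * int (card (Leven (k - 1) d))
             + int (card (Lodd (k - 1) (d - 1))) - int (card (Lodd (k - 2) (d - 1)))"
  proof (intro allI impI conjI)
    fix k d :: nat assume k: "k \<ge> 3" and d: "d \<ge> 1"
    show "int (card (Lodd k d)) = 2 * int (card (Lodd (k - 1) d))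
             + int (card (Leven (k - 1) (d - 1))) - int (card (Leven (k - 2) (d - 1)))"
      using c_rec3[OF k, of "\<lambda>s. s \<le> d \<and> odd s"] unfolding Qo_Suc[OF d] Lodd_LQ Leven_LQ .
    show "int (card (Leven k d)) = 2 * int (card (Leven (k - 1) d))
             + int (card (Lodd (k - 1) (d - 1))) - int (card (Lodd (k - 2) (d - 1)))"
      using c_rec3[OF k, of "\<lambda>s. s \<le> d \<and> even s"] unfolding Qe_Suc[OF d] Lodd_LQ Leven_LQ .
  qed
  have G: "card (Lodd 0 0) = 0" using A by simp
  have H: "\<forall>k\<ge>1. real (card (Lodd k k)) = (real (fib (2 * k)) - real (fib k)) / 2
             \<and> real (card (Leven k k)) = (real (fib (2 * k)) + real (fib k)) / 2"
  proof (intro allI impI)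
    fix k :: nat assume "k \<ge> 1"
    from fib_main[OF this] have i1: "int (card (LQ odd k)) + int (card (LQ even k)) = int (fib (2 * k))"
      and i2: "int (card (LQ even k)) - int (card (LQ odd k)) = int (fib k)" by auto
    have r1: "real (card (LQ odd k)) + real (card (LQ even k)) = real (fib (2 * k))"
      using arg_cong[where f="of_int :: int \<Rightarrow> real", OF i1] by simp
    have r2: "real (card (LQ even k)) - real (card (LQ odd k)) = real (fib k)"
      using arg_cong[where f="of_int :: int \<Rightarrow> real", OF i2] by simp
    have h1: "2 * real (card (LQ odd k)) = real (fib (2 * k)) - real (fib k)" using r1 r2 by linarith
    have h2: "2 * real (card (LQ even k)) = real (fib (2 * k)) + real (fib k)" using r1 r2 by linarith
    have h3: "real (card (LQ odd k)) = (real (fib (2 * k)) - real (fib k)) / 2" using half_real[OF h1] .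
    have h4: "real (card (LQ even k)) = (real (fib (2 * k)) + real (fib k)) / 2" using half_real[OF h2] .
    from h3 h4 show "real (card (Lodd k k)) = (real (fib (2 * k)) - real (fib k)) / 2
             \<and> real (card (Leven k k)) = (real (fib (2 * k)) + real (fib k)) / 2"
      unfolding Lodd_kk Leven_kk by simp
  qed
  show ?thesis using A B C D E F G H by blast
qed


end
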